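(* For $m\leq n$, the module $\mathcal P_n/J_m$ is free as a right $R\mathfrak S_m$-module.
   Context: $R$ is a commutative ring, $\delta\in R$, and $\mathcal P_n=\mathcal P_n(R,\delta)$ is the partition algebra: the free $R$-module on set partitions ("diagrams") of $\{-n,\dots,-1,1,\dots,n\}$ (negative = left nodes, positive = right nodes), with product by stacking, taking the induced partition on outer nodes, and multiplying by $\delta$ for each component consisting only of middle nodes. $J_m\subseteq\mathcal P_n$ is the left ideal spanned by all diagrams in which, among the right nodes $n-m+1,\dots,n$, there is at least one singleton block or at least one pair of distinct nodes in the same block. $R\mathfrak S_m$ acts on the right of $\mathcal P_n$ via $R\mathfrak S_m\subseteq\mathcal P_m\subseteq\mathcal P_n$, where $\mathcal P_m\subseteq\mathcal P_n$ by relabelling $\pm i\mapsto\pm(n-m+i)$ and adjoining blocks $\{-i,i\}$ for $1\leq i\leq n-m$, and $\mathfrak S_m\subseteq\mathcal P_m$ as the permutation diagrams (all blocks of the form $\{-i,j\}$); this action preserves $J_m$. *)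

theory Defs
  imports Main "HOL-Library.Disjoint_Sets" "HOL-Combinatorics.Permutations"
begin

text \<open>Nodes: left nodes -n..-1 (negative), right nodes 1..n (positive).\<close>
definition nodes :: "nat \<Rightarrow> int set" where
  "nodes n = {- int n .. -1} \<union> {1 .. int n}"

definition Diag :: "nat \<Rightarrow> int set set set" where
  "Diag n = {d. partition_on (nodes n) d}"

text \<open>Stacking d1 (left) with d2 (right): right nodes of d1 are glued to the left
  nodes of d2.  Tags: 0 = outer left nodes (of d1), 1 = middle, 2 = outer right (of d2).\<close>
definition emb1 :: "int \<Rightarrow> nat \<times> int" where
  "emb1 i = (if i < 0 then (0, i) else (1, i))"

definition emb2 :: "int \<Rightarrow> nat \<times> int" where
  "emb2 i = (if i < 0 then (1, - i) else (2, i))"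

definition stack_nodes :: "nat \<Rightarrow> (nat \<times> int) set" where
  "stack_nodes n = emb1 ` nodes n \<union> emb2 ` nodes n"

definition middle_nodes :: "nat \<Rightarrow> (nat \<times> int) set" where
  "middle_nodes n = {(1, i) | i. 1 \<le> i \<and> i \<le> int n}"

definition outer_nodes :: "nat \<Rightarrow> (nat \<times> int) set" where
  "outer_nodes n = stack_nodes n - middle_nodes n"

definition stack_rel :: "int set set \<Rightarrow> int set set \<Rightarrow> ((nat \<times> int) \<times> (nat \<times> int)) set" where
  "stack_rel d1 d2 =
     ({(emb1 x, emb1 y) | x y. \<exists>B\<in>d1. x \<in> B \<and> y \<in> B}
      \<union> {(emb2 x, emb2 y) | x y. \<exists>B\<in>d2. x \<in> B \<and> y \<in> B})\<^sup>*"

definition stack_comps :: "nat \<Rightarrow> int set set \<Rightarrow> int set set \<Rightarrow> (nat \<times> int) set set" where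
  "stack_comps n d1 d2 = stack_nodes n // stack_rel d1 d2"

definition dcomp :: "nat \<Rightarrow> int set set \<Rightarrow> int set set \<Rightarrow> int set set" where
  "dcomp n d1 d2 = {snd ` (C \<inter> outer_nodes n) | C. C \<in> stack_comps n d1 d2 \<and> C \<inter> outer_nodes n \<noteq> {}}"

definition nmid :: "nat \<Rightarrow> int set set \<Rightarrow> int set set \<Rightarrow> nat" where
  "nmid n d1 d2 = card {C \<in> stack_comps n d1 d2. C \<subseteq> middle_nodes n}"

text \<open>Elements: R-valued coefficient functions on diagrams (free R-module on Diag n).\<close>
definition Pn :: "nat \<Rightarrow> (int set set \<Rightarrow> 'r::comm_ring_1) set" where
  "Pn n = {f. \<forall>d. d \<notin> Diag n \<longrightarrow> f d = 0}"

definition pmult :: "'r::comm_ring_1 \<Rightarrow> nat \<Rightarrow> (int set set \<Rightarrow> 'r) \<Rightarrow> (int set set \<Rightarrow> 'r) \<Rightarrow> (int set set \<Rightarrow> 'r)" where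
  "pmult \<delta> n f g = (\<lambda>e. \<Sum>d1\<in>Diag n. \<Sum>d2\<in>Diag n.
      if dcomp n d1 d2 = e then f d1 * g d2 * \<delta> ^ nmid n d1 d2 else 0)"

definition last_right :: "nat \<Rightarrow> nat \<Rightarrow> int set" where
  "last_right n m = {int n - int m + 1 .. int n}"

definition Jdiag :: "nat \<Rightarrow> nat \<Rightarrow> int set set \<Rightarrow> bool" where
  "Jdiag n m d \<longleftrightarrow>
     (\<exists>j\<in>last_right n m. {j} \<in> d) \<or>
     (\<exists>j\<in>last_right n m. \<exists>k\<in>last_right n m. j \<noteq> k \<and> (\<exists>B\<in>d. j \<in> B \<and> k \<in> B))"

definition Jm :: "nat \<Rightarrow> nat \<Rightarrow> (int set set \<Rightarrow> 'r::comm_ring_1) set" where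
  "Jm n m = {f \<in> Pn n. \<forall>d. f d \<noteq> 0 \<longrightarrow> Jdiag n m d}"

definition perms :: "nat \<Rightarrow> (nat \<Rightarrow> nat) set" where
  "perms m = {\<sigma>. \<sigma> permutes {1..m}}"

definition RS :: "nat \<Rightarrow> ((nat \<Rightarrow> nat) \<Rightarrow> 'r::comm_ring_1) set" where
  "RS m = {a. \<forall>\<sigma>. \<sigma> \<notin> perms m \<longrightarrow> a \<sigma> = 0}"

text \<open>Permutation diagram of sigma in P_m (blocks {-i, sigma i}), embedded in P_n by
  relabelling +-i to +-(n-m+i) and adjoining blocks {-i,i} for i \<le> n-m.\<close>
definition perm_diag :: "nat \<Rightarrow> nat \<Rightarrow> (nat \<Rightarrow> nat) \<Rightarrow> int set set" where
  "perm_diag n m \<sigma> =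
     {{- int i, int i} | i. 1 \<le> i \<and> i \<le> n - m}
     \<union> {{- (int (n - m) + int i), int (n - m) + int (\<sigma> i)} | i. 1 \<le> i \<and> i \<le> m}"

definition RS_emb :: "nat \<Rightarrow> nat \<Rightarrow> ((nat \<Rightarrow> nat) \<Rightarrow> 'r::comm_ring_1) \<Rightarrow> (int set set \<Rightarrow> 'r)" where
  "RS_emb n m a = (\<lambda>d. \<Sum>\<sigma>\<in>perms m. if perm_diag n m \<sigma> = d then a \<sigma> else 0)"

definition ract :: "'r::comm_ring_1 \<Rightarrow> nat \<Rightarrow> nat \<Rightarrow> (int set set \<Rightarrow> 'r) \<Rightarrow> ((nat \<Rightarrow> nat) \<Rightarrow> 'r) \<Rightarrow> (int set set \<Rightarrow> 'r)" where
  "ract \<delta> n m f a = pmult \<delta> n f (RS_emb n m a)"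

text \<open>B (a set of representatives in P_n) maps to a basis of P_n/J_m over R S_m:
  every class is a finitely supported combination sum_b b.a_b, and such a combination
  lies in J_m only if all coefficients vanish.\<close>
definition free_quotient_basis ::
  "'r::comm_ring_1 \<Rightarrow> nat \<Rightarrow> nat \<Rightarrow> (int set set \<Rightarrow> 'r) set \<Rightarrow> bool" where
  "free_quotient_basis \<delta> n m B \<longleftrightarrow>
     B \<subseteq> Pn n \<and>
     (\<forall>f\<in>Pn n. \<exists>a. (\<forall>b\<in>B. a b \<in> RS m) \<and> finite {b\<in>B. a b \<noteq> (\<lambda>_. 0)} \<and>
        (\<lambda>d. f d - (\<Sum>b\<in>{b\<in>B. a b \<noteq> (\<lambda>_. 0)}. ract \<delta> n m b (a b) d)) \<in> Jm n m) \<and>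
     (\<forall>a. (\<forall>b\<in>B. a b \<in> RS m) \<and> finite {b\<in>B. a b \<noteq> (\<lambda>_. 0)} \<and>
        (\<lambda>d. \<Sum>b\<in>{b\<in>B. a b \<noteq> (\<lambda>_. 0)}. ract \<delta> n m b (a b) d) \<in> Jm n m
        \<longrightarrow> (\<forall>b\<in>B. a b = (\<lambda>_. 0)))"

definition free_right_RS_quotient :: "'r::comm_ring_1 \<Rightarrow> nat \<Rightarrow> nat \<Rightarrow> bool" where
  "free_right_RS_quotient \<delta> n m \<longleftrightarrow> (\<exists>B. free_quotient_basis \<delta> n m B)"

end

theory Submission
  imports Defs
begin

definition Tp :: "nat \<Rightarrow> nat \<Rightarrow> (nat \<Rightarrow> nat) \<Rightarrow> int \<Rightarrow> int" where
  "Tp n m \<sigma> x = (if int (n-m) < x \<and> x \<le> int n then int (n-m) + int (\<sigma> (nat (x - int (n-m)))) else x)"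

lemma Tp_range:
  assumes "\<sigma> permutes {1..m}" "m \<le> n" "int (n-m) < x" "x \<le> int n"
  shows "int (n-m) < Tp n m \<sigma> x \<and> Tp n m \<sigma> x \<le> int n"
proof -
  have "nat (x - int (n-m)) \<in> {1..m}" using assms(2-4) by auto
  hence "\<sigma> (nat (x - int (n-m))) \<in> {1..m}" using permutes_in_image[OF assms(1)] by blast
  thus ?thesis using assms unfolding Tp_def by auto
qed

lemma Tp_out: "\<not> (int (n-m) < x \<and> x \<le> int n) \<Longrightarrow> Tp n m \<sigma> x = x"
  unfolding Tp_def by auto

lemma Tp_comp:
  assumes "\<sigma> permutes {1..m}" "\<rho> permutes {1..m}" "m \<le> n"
  shows "Tp n m \<sigma> (Tp n m \<rho> x) = Tp n m (\<sigma> \<circ> \<rho>) x"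
proof (cases "int (n-m) < x \<and> x \<le> int n")
  case True
  have "nat (x - int (n-m)) \<in> {1..m}" using assms True by auto
  hence "\<rho> (nat (x - int (n-m))) \<in> {1..m}" using permutes_in_image[OF assms(2)] by blast
  then show ?thesis using True assms unfolding Tp_def by auto
next
  case False
  then show ?thesis by (simp add: Tp_out)
qed

lemma Tp_id: "Tp n m id x = x"
  unfolding Tp_def by auto

lemma Tp_inv:
  assumes "\<sigma> permutes {1..m}" "m \<le> n"
  shows "Tp n m (inv \<sigma>) (Tp n m \<sigma> x) = x" "Tp n m \<sigma> (Tp n m (inv \<sigma>) x) = x"
  using Tp_comp[OF permutes_inv[OF assms(1)] assms(1) assms(2)]
    Tp_comp[OF assms(1) permutes_inv[OF assms(1)] assms(2)]
  by (simp_all add: permutes_inv_o[OF assms(1)] Tp_id)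

lemma Tp_inj:
  assumes "\<sigma> permutes {1..m}" "m \<le> n"
  shows "inj (Tp n m \<sigma>)"
  by (metis Tp_inv(1)[OF assms] injI)

lemma Tp_bij:
  assumes "\<sigma> permutes {1..m}" "m \<le> n"
  shows "bij_betw (Tp n m \<sigma>) {1..int n} {1..int n}"
proof (rule bij_betw_byWitness[where f'="Tp n m (inv \<sigma>)"])
  show "\<forall>a\<in>{1..int n}. Tp n m (inv \<sigma>) (Tp n m \<sigma> a) = a" using Tp_inv[OF assms] by simp
  show "\<forall>a'\<in>{1..int n}. Tp n m \<sigma> (Tp n m (inv \<sigma>) a') = a'" using Tp_inv[OF assms] by simp
  have sub: "Tp n m \<tau> ` {1..int n} \<subseteq> {1..int n}" if t: "\<tau> permutes {1..m}" for \<tau>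
  proof
    fix y assume "y \<in> Tp n m \<tau> ` {1..int n}"
    then obtain x where x: "x \<in> {1..int n}" "y = Tp n m \<tau> x" by blast
    show "y \<in> {1..int n}"
    proof (cases "int (n-m) < x \<and> x \<le> int n")
      case True
      then show ?thesis using Tp_range[OF t assms(2), of x] x by auto
    next
      case False
      then show ?thesis using Tp_out[OF False] x by simp
    qed
  qed
  show "Tp n m \<sigma> ` {1..int n} \<subseteq> {1..int n}" using sub[OF assms(1)] .
  show "Tp n m (inv \<sigma>) ` {1..int n} \<subseteq> {1..int n}" using sub[OF permutes_inv[OF assms(1)]] .
qed

definition pd :: "nat \<Rightarrow> (int \<Rightarrow> int) \<Rightarrow> int set set" where
  "pd n T = {{-x, T x} | x. 1 \<le> x \<and> x \<le> int n}"

definition pre :: "nat \<Rightarrow> (int \<Rightarrow> int) \<Rightarrow> nat \<times> int \<Rightarrow> int" where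
  "pre n T u = (if fst u = 2 then the_inv_into {1..int n} T (snd u) else snd u)"

lemma stack_nodes_iff:
  "u \<in> stack_nodes n \<longleftrightarrow>
    (fst u = 0 \<and> - int n \<le> snd u \<and> snd u \<le> -1) \<or> (fst u = 1 \<and> 1 \<le> snd u \<and> snd u \<le> int n)
    \<or> (fst u = 2 \<and> 1 \<le> snd u \<and> snd u \<le> int n)"
proof
  assume "u \<in> stack_nodes n"
  thus "(fst u = 0 \<and> - int n \<le> snd u \<and> snd u \<le> -1) \<or> (fst u = 1 \<and> 1 \<le> snd u \<and> snd u \<le> int n)
    \<or> (fst u = 2 \<and> 1 \<le> snd u \<and> snd u \<le> int n)"
    unfolding stack_nodes_def emb1_def emb2_def nodes_def by auto
next
  obtain t i where u: "u = (t, i)" by fastforce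
  assume "(fst u = 0 \<and> - int n \<le> snd u \<and> snd u \<le> -1) \<or> (fst u = 1 \<and> 1 \<le> snd u \<and> snd u \<le> int n)
    \<or> (fst u = 2 \<and> 1 \<le> snd u \<and> snd u \<le> int n)"
  then consider "t = 0" "- int n \<le> i" "i \<le> -1" | "t = 1" "1 \<le> i" "i \<le> int n" | "t = 2" "1 \<le> i" "i \<le> int n"
    using u by auto
  then show "u \<in> stack_nodes n"
  proof cases
    case 1
    then have "u = emb1 i" "i \<in> nodes n" using u by (auto simp: emb1_def nodes_def)
    then show ?thesis unfolding stack_nodes_def by blast
  next
    case 2
    then have "u = emb1 i" "i \<in> nodes n" using u by (auto simp: emb1_def nodes_def)
    then show ?thesis unfolding stack_nodes_def by blast
  next
    case 3
    then have "u = emb2 i" "i \<in> nodes n" using u by (auto simp: emb2_def nodes_def)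
    then show ?thesis unfolding stack_nodes_def by blast
  qed
qed

lemma middle_iff: "u \<in> middle_nodes n \<longleftrightarrow> fst u = 1 \<and> 1 \<le> snd u \<and> snd u \<le> int n"
  unfolding middle_nodes_def by (cases u) auto

lemma pre_emb1: "pre n T (emb1 x) = x"
  unfolding pre_def emb1_def by auto

lemma emb1_in: "x \<in> nodes n \<Longrightarrow> emb1 x \<in> stack_nodes n"
  unfolding stack_nodes_def by blast

lemma nodes_iff: "x \<in> nodes n \<longleftrightarrow> (- int n \<le> x \<and> x \<le> -1) \<or> (1 \<le> x \<and> x \<le> int n)"
  unfolding nodes_def by auto

locale stk =
  fixes n :: nat and d1 :: "int set set" and T :: "int \<Rightarrow> int"
  assumes d1: "partition_on (nodes n) d1"
    and bij: "bij_betw T {1..int n} {1..int n}"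
    and fix0: "\<And>x. x \<le> 0 \<Longrightarrow> T x = x"
begin

abbreviation "R \<equiv> stack_rel d1 (pd n T)"
abbreviation "S \<equiv> stack_nodes n"
abbreviation "base \<equiv> {(emb1 x, emb1 y) | x y. \<exists>B\<in>d1. x \<in> B \<and> y \<in> B}
      \<union> {(emb2 x, emb2 y) | x y. \<exists>B\<in>pd n T. x \<in> B \<and> y \<in> B}"

lemma R_eq: "R = base\<^sup>*" unfolding stack_rel_def by simp

lemma blk_uniq: "B \<in> d1 \<Longrightarrow> B' \<in> d1 \<Longrightarrow> x \<in> B \<Longrightarrow> x \<in> B' \<Longrightarrow> B = B'"
  using partition_onD2[OF d1] by (auto simp: disjoint_def)

lemma blk_sub: "B \<in> d1 \<Longrightarrow> B \<subseteq> nodes n"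
  using partition_onD1[OF d1] by auto

lemma blk_ex: "x \<in> nodes n \<Longrightarrow> \<exists>B\<in>d1. x \<in> B"
  using partition_onD1[OF d1] by auto

lemma blk_ne: "B \<in> d1 \<Longrightarrow> B \<noteq> {}"
  using partition_onD3[OF d1] by auto

lemma Tinv: "1 \<le> x \<Longrightarrow> x \<le> int n \<Longrightarrow> the_inv_into {1..int n} T (T x) = x"
  using bij by (simp add: bij_betw_def the_inv_into_f_f)

lemma Tinv2: "1 \<le> j \<Longrightarrow> j \<le> int n \<Longrightarrow>
   the_inv_into {1..int n} T j \<in> {1..int n} \<and> T (the_inv_into {1..int n} T j) = j"
  using bij by (metis atLeastAtMost_iff bij_betw_def f_the_inv_into_f the_inv_into_into order_refl)

lemma Tin: "1 \<le> x \<Longrightarrow> x \<le> int n \<Longrightarrow> 1 \<le> T x \<and> T x \<le> int n"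
  using bij by (auto simp: bij_betw_def)

lemma pre_nodes: "u \<in> S \<Longrightarrow> pre n T u \<in> nodes n"
  using Tinv2 by (auto simp: stack_nodes_iff pre_def nodes_iff)

lemma base_P: "(v, w) \<in> base \<Longrightarrow> v \<in> S \<and> w \<in> S \<and> (\<exists>B\<in>d1. pre n T v \<in> B \<and> pre n T w \<in> B)"
proof -
  assume "(v, w) \<in> base"
  then consider (a) x y B where "v = emb1 x" "w = emb1 y" "B \<in> d1" "x \<in> B" "y \<in> B"
    | (b) x y z where "v = emb2 x" "w = emb2 y" "x \<in> {-z, T z}" "y \<in> {-z, T z}" "1 \<le> z" "z \<le> int n"
    unfolding pd_def by blast
  then show ?thesis
  proof cases
    case a
    then show ?thesis using blk_sub emb1_in pre_emb1 by (metis subsetD)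
  next
    case b
    have Tz: "1 \<le> T z" "T z \<le> int n" using Tin b by auto
    have e1: "emb2 (-z) = (1, z)" using b by (simp add: emb2_def)
    have e2: "emb2 (T z) = (2, T z)" using Tz by (simp add: emb2_def)
    have p1: "pre n T (1, z) = z" by (simp add: pre_def)
    have p2: "pre n T (2, T z) = z" using Tinv b by (simp add: pre_def)
    have s1: "(1, z) \<in> S" "(2, T z) \<in> S" using b Tz by (auto simp: stack_nodes_iff)
    have "z \<in> nodes n" using b by (simp add: nodes_iff)
    then obtain B where "B \<in> d1" "z \<in> B" using blk_ex by blast
    then show ?thesis using b e1 e2 p1 p2 s1 by auto
  qed
qed

lemma R_sub: "(u, v) \<in> R \<Longrightarrow> u = v \<or> (u \<in> S \<and> v \<in> S \<and> (\<exists>B\<in>d1. pre n T u \<in> B \<and> pre n T v \<in> B))"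
  unfolding R_eq
proof (induction rule: rtrancl_induct)
  case base
  then show ?case by simp
next
  case (step y z)
  from base_P[OF step(2)] obtain B where B: "y \<in> S" "z \<in> S" "B \<in> d1" "pre n T y \<in> B" "pre n T z \<in> B" by blast
  from step(3) show ?case
  proof
    assume "u = y" then show ?thesis using B by blast
  next
    assume "u \<in> S \<and> y \<in> S \<and> (\<exists>B\<in>d1. pre n T u \<in> B \<and> pre n T y \<in> B)"
    then obtain B' where "u \<in> S" "B' \<in> d1" "pre n T u \<in> B'" "pre n T y \<in> B'" by blast
    then show ?thesis using B blk_uniq by metis
  qed
qed

lemma to_emb1: "u \<in> S \<Longrightarrow> (u, emb1 (pre n T u)) \<in> R \<and> (emb1 (pre n T u), u) \<in> R"
proof -
  assume u: "u \<in> S"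
  show ?thesis
  proof (cases "fst u = 2")
    case False
    then have "emb1 (pre n T u) = u" using u
      by (cases u) (auto simp: stack_nodes_iff pre_def emb1_def)
    then show ?thesis unfolding R_eq by simp
  next
    case True
    obtain j where uj: "u = (2, j)" "1 \<le> j" "j \<le> int n" using u True by (cases u) (auto simp: stack_nodes_iff)
    define z where "z = the_inv_into {1..int n} T j"
    have z: "1 \<le> z" "z \<le> int n" "T z = j" using Tinv2[OF uj(2,3)] z_def by auto
    have pz: "pre n T u = z" using uj z_def by (simp add: pre_def)
    have e1: "emb1 z = emb2 (-z)" using z by (simp add: emb1_def emb2_def)
    have e2: "u = emb2 (T z)" using z uj by (simp add: emb2_def)
    have blk: "{-z, T z} \<in> pd n T" using z unfolding pd_def by blast
    have "(emb2 (-z), emb2 (T z)) \<in> base" "(emb2 (T z), emb2 (-z)) \<in> base" using blk by blast+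
    hence "(emb2 (T z), emb2 (-z)) \<in> R \<and> (emb2 (-z), emb2 (T z)) \<in> R" unfolding R_eq
      by (simp add: r_into_rtrancl)
    hence "(u, emb1 z) \<in> R \<and> (emb1 z, u) \<in> R" by (simp only: e1 e2)
    then show ?thesis by (simp only: pz)
  qed
qed

lemma R_img: assumes "u \<in> S" "B \<in> d1" "pre n T u \<in> B"
  shows "R `` {u} = {v \<in> S. pre n T v \<in> B}"
proof
  show "R `` {u} \<subseteq> {v \<in> S. pre n T v \<in> B}"
  proof
    fix v assume "v \<in> R `` {u}"
    then have "(u, v) \<in> R" by blast
    from R_sub[OF this] show "v \<in> {v \<in> S. pre n T v \<in> B}"
    proof
      assume "u = v" then show ?thesis using assms by blast
    next
      assume "u \<in> S \<and> v \<in> S \<and> (\<exists>B\<in>d1. pre n T u \<in> B \<and> pre n T v \<in> B)"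
      then obtain B' where "v \<in> S" "B' \<in> d1" "pre n T u \<in> B'" "pre n T v \<in> B'" by blast
      then show ?thesis using assms blk_uniq by blast
    qed
  qed
  show "{v \<in> S. pre n T v \<in> B} \<subseteq> R `` {u}"
  proof
    fix v assume v: "v \<in> {v \<in> S. pre n T v \<in> B}"
    have "(emb1 (pre n T u), emb1 (pre n T v)) \<in> base" using v assms by blast
    hence "(emb1 (pre n T u), emb1 (pre n T v)) \<in> R" unfolding R_eq by (rule r_into_rtrancl)
    moreover have "(u, emb1 (pre n T u)) \<in> R" "(emb1 (pre n T v), v) \<in> R"
      using to_emb1 assms v by auto
    ultimately have "(u, v) \<in> R" unfolding R_eq by (meson rtrancl_trans)
    thus "v \<in> R `` {u}" by blast
  qed
qed

definition cls where "cls B = {v \<in> S. pre n T v \<in> B}"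

lemma comps: "stack_comps n d1 (pd n T) = cls ` d1"
proof
  show "stack_comps n d1 (pd n T) \<subseteq> cls ` d1"
  proof
    fix C assume "C \<in> stack_comps n d1 (pd n T)"
    then obtain u where u: "u \<in> S" "C = R `` {u}" unfolding stack_comps_def quotient_def by blast
    obtain B where "B \<in> d1" "pre n T u \<in> B" using blk_ex pre_nodes u by blast
    then show "C \<in> cls ` d1" using R_img u cls_def by auto
  qed
  show "cls ` d1 \<subseteq> stack_comps n d1 (pd n T)"
  proof
    fix C assume "C \<in> cls ` d1"
    then obtain B where B: "B \<in> d1" "C = cls B" by blast
    then obtain x where x: "x \<in> B" using blk_ne by blast
    have "x \<in> nodes n" using x B blk_sub by blast
    hence "emb1 x \<in> S" by (rule emb1_in)
    hence "C = R `` {emb1 x}" using R_img[of "emb1 x" B] B x pre_emb1 cls_def by auto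
    thus "C \<in> stack_comps n d1 (pd n T)" unfolding stack_comps_def quotient_def
      using \<open>emb1 x \<in> S\<close> by blast
  qed
qed

lemma cls_outer: assumes "B \<in> d1" shows "snd ` (cls B \<inter> outer_nodes n) = T ` B"
proof
  show "snd ` (cls B \<inter> outer_nodes n) \<subseteq> T ` B"
  proof
    fix i assume "i \<in> snd ` (cls B \<inter> outer_nodes n)"
    then obtain v where v: "v \<in> S" "pre n T v \<in> B" "v \<notin> middle_nodes n" "i = snd v"
      unfolding cls_def outer_nodes_def by blast
    obtain t j where tj: "v = (t, j)" by fastforce
    show "i \<in> T ` B"
    proof (cases "t = 2")
      case True
      then have "1 \<le> j" "j \<le> int n" using v tj by (auto simp: stack_nodes_iff)
      then show ?thesis using Tinv2 v tj True by (auto simp: pre_def intro!: image_eqI[where x="pre n T v"])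
    next
      case False
      then have "t = 0" "j \<le> -1" using v tj by (auto simp: stack_nodes_iff middle_iff)
      then show ?thesis using v tj fix0[of j] by (auto simp: pre_def intro!: image_eqI[where x=j])
    qed
  qed
  show "T ` B \<subseteq> snd ` (cls B \<inter> outer_nodes n)"
  proof
    fix i assume "i \<in> T ` B"
    then obtain x where x: "x \<in> B" "i = T x" by blast
    have xn: "x \<in> nodes n" using x assms blk_sub by blast
    show "i \<in> snd ` (cls B \<inter> outer_nodes n)"
    proof (cases "x < 0")
      case True
      have "(0, x) \<in> cls B \<inter> outer_nodes n" using xn x True
        by (auto simp: cls_def outer_nodes_def stack_nodes_iff middle_iff nodes_iff pre_def)
      then show ?thesis using x fix0[of x] True by (auto intro!: image_eqI[where x="(0,x)"])
    next
      case False
      then have "1 \<le> x" "x \<le> int n" using xn by (auto simp: nodes_iff)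
      then have "(2, T x) \<in> cls B \<inter> outer_nodes n" using Tin Tinv x
        by (auto simp: cls_def outer_nodes_def stack_nodes_iff middle_iff pre_def)
      then show ?thesis using x by (auto intro!: image_eqI[where x="(2,T x)"])
    qed
  qed
qed

lemma dcomp_eq: "dcomp n d1 (pd n T) = (\<lambda>B. T ` B) ` d1"
proof -
  have ne: "cls B \<inter> outer_nodes n \<noteq> {}" if "B \<in> d1" for B
    using cls_outer[OF that] blk_ne[OF that] by auto
  show ?thesis unfolding dcomp_def comps
  proof (intro set_eqI iffI)
    fix X assume "X \<in> {snd ` (C \<inter> outer_nodes n) |C. C \<in> cls ` d1 \<and> C \<inter> outer_nodes n \<noteq> {}}"
    then obtain B where B: "B \<in> d1" "X = snd ` (cls B \<inter> outer_nodes n)" by blast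
    then show "X \<in> (\<lambda>B. T ` B) ` d1" using cls_outer[OF B(1)] by blast
  next
    fix X assume "X \<in> (\<lambda>B. T ` B) ` d1"
    then obtain B where B: "B \<in> d1" "X = T ` B" by blast
    show "X \<in> {snd ` (C \<inter> outer_nodes n) |C. C \<in> cls ` d1 \<and> C \<inter> outer_nodes n \<noteq> {}}"
      using B ne[OF B(1)] cls_outer[OF B(1)] by blast
  qed
qed

lemma nmid_eq: "nmid n d1 (pd n T) = 0"
proof -
  have ne: "cls B \<inter> outer_nodes n \<noteq> {}" if "B \<in> d1" for B
    using cls_outer[OF that] blk_ne[OF that] by auto
  have E: "{C \<in> stack_comps n d1 (pd n T). C \<subseteq> middle_nodes n} = {}"
    unfolding comps using ne by (auto simp: outer_nodes_def)
  show ?thesis unfolding nmid_def E by simp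
qed

end

definition act :: "nat \<Rightarrow> nat \<Rightarrow> (nat \<Rightarrow> nat) \<Rightarrow> int set set \<Rightarrow> int set set" where
  "act n m \<sigma> d = (\<lambda>B. Tp n m \<sigma> ` B) ` d"

lemma perm_diag_pd:
  assumes "\<sigma> permutes {1..m}" "m \<le> n"
  shows "perm_diag n m \<sigma> = pd n (Tp n m \<sigma>)"
proof (rule set_eqI, rule iffI)
  fix X assume "X \<in> perm_diag n m \<sigma>"
  then consider (a) i where "X = {- int i, int i}" "1 \<le> i" "i \<le> n - m"
    | (b) i where "X = {- (int (n - m) + int i), int (n - m) + int (\<sigma> i)}" "1 \<le> i" "i \<le> m"
    unfolding perm_diag_def by blast
  then show "X \<in> pd n (Tp n m \<sigma>)"
  proof cases
    case a
    have "Tp n m \<sigma> (int i) = int i" using a by (intro Tp_out) auto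
    then have "X = {- int i, Tp n m \<sigma> (int i)}" using a by simp
    moreover have "1 \<le> int i \<and> int i \<le> int n" using a by auto
    ultimately show ?thesis unfolding pd_def by blast
  next
    case b
    have "Tp n m \<sigma> (int (n - m) + int i) = int (n - m) + int (\<sigma> i)" using b assms(2)
      unfolding Tp_def by auto
    then have "X = {- (int (n - m) + int i), Tp n m \<sigma> (int (n - m) + int i)}" using b by simp
    moreover have "1 \<le> int (n - m) + int i \<and> int (n - m) + int i \<le> int n" using b assms(2) by auto
    ultimately show ?thesis unfolding pd_def by blast
  qed
next
  fix X assume "X \<in> pd n (Tp n m \<sigma>)"
  then obtain x where x: "X = {-x, Tp n m \<sigma> x}" "1 \<le> x" "x \<le> int n" unfolding pd_def by blast
  show "X \<in> perm_diag n m \<sigma>"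
  proof (cases "x \<le> int (n - m)")
    case True
    then have "Tp n m \<sigma> x = x" by (intro Tp_out) auto
    then have "X = {- int (nat x), int (nat x)}" "1 \<le> nat x" "nat x \<le> n - m" using x True by auto
    then show ?thesis unfolding perm_diag_def by blast
  next
    case False
    define i where "i = nat (x - int (n - m))"
    have i: "1 \<le> i" "i \<le> m" "x = int (n - m) + int i" using False x assms(2) unfolding i_def by auto
    have "Tp n m \<sigma> x = int (n - m) + int (\<sigma> i)" using False x unfolding Tp_def i_def by auto
    then have "X = {- (int (n - m) + int i), int (n - m) + int (\<sigma> i)}" using x i by simp
    then show ?thesis unfolding perm_diag_def using i by blast
  qed
qed

lemma Tp_fix0: "x \<le> 0 \<Longrightarrow> Tp n m \<sigma> x = x"
  by (intro Tp_out) auto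

lemma dcomp_perm:
  assumes "\<sigma> \<in> perms m" "m \<le> n" "d \<in> Diag n"
  shows "dcomp n d (perm_diag n m \<sigma>) = act n m \<sigma> d" "nmid n d (perm_diag n m \<sigma>) = 0"
proof -
  have p: "\<sigma> permutes {1..m}" using assms(1) unfolding perms_def by simp
  interpret stk n d "Tp n m \<sigma>"
    using assms(3) Tp_bij[OF p assms(2)] Tp_fix0 by unfold_locales (auto simp: Diag_def)
  show "dcomp n d (perm_diag n m \<sigma>) = act n m \<sigma> d"
    unfolding perm_diag_pd[OF p assms(2)] dcomp_eq act_def ..
  show "nmid n d (perm_diag n m \<sigma>) = 0"
    unfolding perm_diag_pd[OF p assms(2)] by (rule nmid_eq)
qed

lemma pd_partition:
  assumes bij: "bij_betw T {1..int n} {1..int n}"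
  shows "partition_on (nodes n) (pd n T)"
proof (rule partition_onI)
  have Tin: "1 \<le> T x \<and> T x \<le> int n" if "1 \<le> x" "x \<le> int n" for x
    using bij that by (auto simp: bij_betw_def)
  show "\<Union> (pd n T) = nodes n"
  proof
    show "\<Union> (pd n T) \<subseteq> nodes n"
    proof
      fix y assume "y \<in> \<Union> (pd n T)"
      then obtain x where "y \<in> {-x, T x}" "1 \<le> x" "x \<le> int n" unfolding pd_def by blast
      then show "y \<in> nodes n" using Tin[of x] by (auto simp: nodes_iff)
    qed
    show "nodes n \<subseteq> \<Union> (pd n T)"
    proof
      fix y assume y: "y \<in> nodes n"
      show "y \<in> \<Union> (pd n T)"
      proof (cases "y < 0")
        case True
        have "1 \<le> -y \<and> -y \<le> int n" using y True by (auto simp: nodes_iff)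
        then have "{-(-y), T (-y)} \<in> pd n T" unfolding pd_def by blast
        then show ?thesis by auto
      next
        case False
        then have y1: "y \<in> {1..int n}" using y by (auto simp: nodes_iff)
        define x where "x = the_inv_into {1..int n} T y"
        have "x \<in> {1..int n}" using bij y1 unfolding x_def bij_betw_def
          by (metis order_refl the_inv_into_into)
        moreover have "T x = y" using bij y1 unfolding x_def bij_betw_def
          by (metis f_the_inv_into_f)
        ultimately have "1 \<le> x \<and> x \<le> int n" "T x = y" by auto
        then have "{-x, T x} \<in> pd n T" "y \<in> {-x, T x}" unfolding pd_def by blast+
        then show ?thesis by blast
      qed
    qed
  qed
  show "disjnt p q" if hp: "p \<in> pd n T" and hq: "q \<in> pd n T" and hne: "p \<noteq> q" for p q
  proof -
    obtain x where x: "p = {-x, T x}" "1 \<le> x" "x \<le> int n" using hp unfolding pd_def by blast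
    obtain y where y: "q = {-y, T y}" "1 \<le> y" "y \<le> int n" using hq unfolding pd_def by blast
    have "x \<noteq> y" using x y hne by auto
    then have "T x \<noteq> T y" using bij x y unfolding bij_betw_def inj_on_def by auto
    moreover have "1 \<le> T x" "1 \<le> T y" using Tin x y by auto
    ultimately show ?thesis using x y \<open>x \<noteq> y\<close> by (auto simp: disjnt_def)
  qed
  show "{} \<notin> pd n T" unfolding pd_def by auto
qed

lemma perm_diag_Diag:
  assumes "\<sigma> \<in> perms m" "m \<le> n"
  shows "perm_diag n m \<sigma> \<in> Diag n"
proof -
  have p: "\<sigma> permutes {1..m}" using assms(1) unfolding perms_def by simp
  show ?thesis unfolding perm_diag_pd[OF p assms(2)] Diag_def
    using pd_partition[OF Tp_bij[OF p assms(2)]] by simp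
qed

lemma Tp_nodes:
  assumes "\<sigma> permutes {1..m}" "m \<le> n"
  shows "Tp n m \<sigma> ` nodes n = nodes n"
proof -
  have "nodes n = {- int n .. -1} \<union> {1..int n}" unfolding nodes_def ..
  moreover have "Tp n m \<sigma> ` {- int n .. -1} = {- int n .. -1}"
  proof -
    have "Tp n m \<sigma> ` {- int n .. -1} = id ` {- int n .. -1}"
      by (rule image_cong) (auto simp: Tp_fix0)
    thus ?thesis by simp
  qed
  moreover have "Tp n m \<sigma> ` {1..int n} = {1..int n}"
    using Tp_bij[OF assms] by (simp add: bij_betw_def)
  ultimately show ?thesis by (simp add: image_Un)
qed

lemma act_Diag:
  assumes "\<sigma> \<in> perms m" "m \<le> n" "d \<in> Diag n"
  shows "act n m \<sigma> d \<in> Diag n"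
proof -
  have p: "\<sigma> permutes {1..m}" using assms(1) unfolding perms_def by simp
  have pd: "partition_on (nodes n) d" using assms(3) by (simp add: Diag_def)
  have "partition_on (Tp n m \<sigma> ` nodes n) ((`) (Tp n m \<sigma>) ` d - {{}})"
    by (rule partition_on_inj_image[OF pd]) (meson Tp_inj[OF p assms(2)] inj_on_subset subset_UNIV)
  moreover have "(`) (Tp n m \<sigma>) ` d - {{}} = act n m \<sigma> d"
    using partition_onD3[OF pd] unfolding act_def by auto
  ultimately show ?thesis using Tp_nodes[OF p assms(2)] by (simp add: Diag_def)
qed

lemma act_comp:
  assumes "\<sigma> \<in> perms m" "\<rho> \<in> perms m" "m \<le> n"
  shows "act n m \<sigma> (act n m \<rho> d) = act n m (\<sigma> \<circ> \<rho>) d"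
proof -
  have p: "\<sigma> permutes {1..m}" "\<rho> permutes {1..m}" using assms unfolding perms_def by auto
  have "\<And>B. Tp n m \<sigma> ` Tp n m \<rho> ` B = Tp n m (\<sigma> \<circ> \<rho>) ` B"
    using Tp_comp[OF p assms(3)] by (simp add: image_image)
  then show ?thesis unfolding act_def by (simp add: image_image)
qed

lemma act_id: "act n m id d = d"
proof -
  have "Tp n m id = (\<lambda>x. x)" by (rule ext) (rule Tp_id)
  then show ?thesis unfolding act_def by simp
qed

lemma id_perms: "id \<in> perms m" unfolding perms_def by simp

lemma perms_comp: "\<sigma> \<in> perms m \<Longrightarrow> \<rho> \<in> perms m \<Longrightarrow> \<sigma> \<circ> \<rho> \<in> perms m"
  unfolding perms_def by (simp add: permutes_compose)

lemma perms_inv: "\<sigma> \<in> perms m \<Longrightarrow> inv \<sigma> \<in> perms m"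
  unfolding perms_def by (simp add: permutes_inv)

lemma act_inv:
  assumes "\<sigma> \<in> perms m" "m \<le> n"
  shows "act n m (inv \<sigma>) (act n m \<sigma> d) = d"
proof -
  have p: "\<sigma> permutes {1..m}" using assms unfolding perms_def by auto
  show ?thesis using act_comp[OF perms_inv[OF assms(1)] assms(1) assms(2)]
    by (simp add: permutes_inv_o[OF p] act_id)
qed

lemma last_right_eq: "m \<le> n \<Longrightarrow> j \<in> last_right n m \<longleftrightarrow> int (n-m) < j \<and> j \<le> int n"
  unfolding last_right_def by auto

lemma Jdiag_act:
  assumes "\<sigma> \<in> perms m" "m \<le> n" "Jdiag n m d"
  shows "Jdiag n m (act n m \<sigma> d)"
proof -
  have p: "\<sigma> permutes {1..m}" using assms unfolding perms_def by auto
  have lr: "Tp n m \<sigma> j \<in> last_right n m" if "j \<in> last_right n m" for j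
    using Tp_range[OF p assms(2)] that last_right_eq[OF assms(2)] by blast
  have inj: "inj (Tp n m \<sigma>)" by (rule Tp_inj[OF p assms(2)])
  from assms(3) consider (s) j where "j \<in> last_right n m" "{j} \<in> d"
    | (t) j k B where "j \<in> last_right n m" "k \<in> last_right n m" "j \<noteq> k" "B \<in> d" "j \<in> B" "k \<in> B"
    unfolding Jdiag_def by blast
  then show ?thesis
  proof cases
    case s
    then have "{Tp n m \<sigma> j} \<in> act n m \<sigma> d" unfolding act_def
      by (metis image_empty image_eqI image_insert)
    then show ?thesis using lr[OF s(1)] unfolding Jdiag_def by blast
  next
    case t
    have "Tp n m \<sigma> j \<noteq> Tp n m \<sigma> k" using inj t(3) by (meson injD)
    moreover have "Tp n m \<sigma> ` B \<in> act n m \<sigma> d" using t(4) unfolding act_def by blast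
    ultimately show ?thesis using lr[OF t(1)] lr[OF t(2)] t(5,6) unfolding Jdiag_def by blast
  qed
qed

lemma N_act:
  assumes "\<sigma> \<in> perms m" "m \<le> n" "\<not> Jdiag n m d"
  shows "\<not> Jdiag n m (act n m \<sigma> d)"
  using Jdiag_act[OF perms_inv[OF assms(1)] assms(2)] act_inv[OF assms(1,2)] assms(3) by metis

lemma act_free:
  assumes "\<sigma> \<in> perms m" "\<rho> \<in> perms m" "m \<le> n" "d \<in> Diag n" "\<not> Jdiag n m d"
    and eq: "act n m \<sigma> d = act n m \<rho> d"
  shows "\<sigma> = \<rho>"
proof -
  have p: "\<sigma> permutes {1..m}" "\<rho> permutes {1..m}" using assms unfolding perms_def by auto
  have pd: "partition_on (nodes n) d" using assms(4) by (simp add: Diag_def)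
  have uniq: "B = B'" if "B \<in> d" "B' \<in> d" "x \<in> B" "x \<in> B'" for B B' x
    using partition_onD2[OF pd] that by (auto simp: disjoint_def)
  have inr: "int (n-m) < Tp n m \<tau> y \<and> Tp n m \<tau> y \<le> int n \<longleftrightarrow> int (n-m) < y \<and> y \<le> int n"
    if "\<tau> permutes {1..m}" for \<tau> y
    using Tp_range[OF that assms(3)] Tp_out by metis
  have key: "\<sigma> i = \<rho> i" if i: "i \<in> {1..m}" for i
  proof -
    define j where "j = int (n-m) + int i"
    have jr: "int (n-m) < j \<and> j \<le> int n" using i assms(3) unfolding j_def by auto
    then have jl: "j \<in> last_right n m" using last_right_eq[OF assms(3)] by simp
    have "j \<in> nodes n" using jr by (auto simp: nodes_iff)
    then obtain B where B: "B \<in> d" "j \<in> B" using partition_onD1[OF pd] by auto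
    have "B \<noteq> {j}" using assms(5) B jl unfolding Jdiag_def by blast
    then obtain x where x: "x \<in> B" "x \<noteq> j" using B by blast
    have xn: "\<not> (int (n-m) < x \<and> x \<le> int n)"
      using assms(5) x B jl last_right_eq[OF assms(3)] unfolding Jdiag_def by blast
    have "Tp n m \<sigma> ` B \<in> act n m \<rho> d" using B eq unfolding act_def by blast
    then obtain B' where B': "B' \<in> d" "Tp n m \<sigma> ` B = Tp n m \<rho> ` B'" unfolding act_def by blast
    have "x \<in> Tp n m \<rho> ` B'" using B'(2) x Tp_out[OF xn] by (metis image_eqI)
    then obtain y where y: "y \<in> B'" "x = Tp n m \<rho> y" by blast
    have "y = x" using y xn inr[OF p(2), of y] Tp_out by metis
    then have "B = B'" using uniq B'(1) B(1) x(1) y(1) by blast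
    have "Tp n m \<sigma> j \<in> Tp n m \<rho> ` B" using B'(2) B(2) \<open>B = B'\<close> by blast
    then obtain y' where y': "y' \<in> B" "Tp n m \<sigma> j = Tp n m \<rho> y'" by blast
    have "int (n-m) < y' \<and> y' \<le> int n" using y'(2) inr[OF p(1), of j] inr[OF p(2), of y'] jr by simp
    then have "y' = j" using assms(5) y'(1) B jl last_right_eq[OF assms(3)] unfolding Jdiag_def by blast
    then have "Tp n m \<sigma> j = Tp n m \<rho> j" using y' by simp
    then have "int (\<sigma> (nat (j - int (n-m)))) = int (\<rho> (nat (j - int (n-m))))"
      using jr unfolding Tp_def by simp
    then show ?thesis unfolding j_def by simp
  qed
  show ?thesis
  proof
    fix i show "\<sigma> i = \<rho> i"
    proof (cases "i \<in> {1..m}")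
      case True then show ?thesis by (rule key)
    next
      case False then show ?thesis using permutes_not_in[OF p(1)] permutes_not_in[OF p(2)] by simp
    qed
  qed
qed

definition orb :: "nat \<Rightarrow> nat \<Rightarrow> int set set \<Rightarrow> int set set set" where
  "orb n m d = {act n m \<sigma> d | \<sigma>. \<sigma> \<in> perms m}"

definition canon :: "nat \<Rightarrow> nat \<Rightarrow> int set set \<Rightarrow> int set set" where
  "canon n m d = (SOME e. e \<in> orb n m d)"

definition reps :: "nat \<Rightarrow> nat \<Rightarrow> int set set set" where
  "reps n m = {d \<in> Diag n. \<not> Jdiag n m d \<and> canon n m d = d}"

definition sig :: "nat \<Rightarrow> nat \<Rightarrow> int set set \<Rightarrow> nat \<Rightarrow> nat" where
  "sig n m e = (SOME \<sigma>. \<sigma> \<in> perms m \<and> act n m \<sigma> (canon n m e) = e)"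

definition ind :: "int set set \<Rightarrow> int set set \<Rightarrow> 'r::comm_ring_1" where
  "ind d e = (if e = d then 1 else 0)"

lemma orb_self: "d \<in> orb n m d"
proof -
  have "d = act n m id d" by (simp add: act_id)
  then show ?thesis unfolding orb_def using id_perms by blast
qed

lemma orb_trans:
  assumes "m \<le> n" "e \<in> orb n m d"
  shows "orb n m e = orb n m d"
proof -
  obtain \<rho> where r: "\<rho> \<in> perms m" "e = act n m \<rho> d" using assms(2) unfolding orb_def by blast
  have p: "\<rho> permutes {1..m}" using r unfolding perms_def by simp
  show ?thesis
  proof
    show "orb n m e \<subseteq> orb n m d"
    proof
      fix x assume "x \<in> orb n m e"
      then obtain \<sigma> where s: "\<sigma> \<in> perms m" "x = act n m \<sigma> e" unfolding orb_def by blast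
      then have "x = act n m (\<sigma> \<circ> \<rho>) d" using act_comp[OF s(1) r(1) assms(1)] r(2) by simp
      then show "x \<in> orb n m d" unfolding orb_def using perms_comp[OF s(1) r(1)] by blast
    qed
    show "orb n m d \<subseteq> orb n m e"
    proof
      fix x assume "x \<in> orb n m d"
      then obtain \<sigma> where s: "\<sigma> \<in> perms m" "x = act n m \<sigma> d" unfolding orb_def by blast
      have sr: "\<sigma> \<circ> inv \<rho> \<in> perms m" using perms_comp[OF s(1) perms_inv[OF r(1)]] .
      have "act n m (\<sigma> \<circ> inv \<rho>) e = act n m ((\<sigma> \<circ> inv \<rho>) \<circ> \<rho>) d"
        using act_comp[OF sr r(1) assms(1)] r(2) by simp
      also have "(\<sigma> \<circ> inv \<rho>) \<circ> \<rho> = \<sigma>" using permutes_inv_o(2)[OF p] by (simp add: o_assoc[symmetric])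
      finally have eq: "act n m (\<sigma> \<circ> inv \<rho>) e = act n m \<sigma> d" .
      have "x = act n m (\<sigma> \<circ> inv \<rho>) e" using s(2) eq by (simp only:)
      then show "x \<in> orb n m e" unfolding orb_def using sr by blast
    qed
  qed
qed

lemma canon_in: "canon n m d \<in> orb n m d"
  unfolding canon_def by (rule someI[of _ d]) (rule orb_self)

lemma canon_eq: "m \<le> n \<Longrightarrow> e \<in> orb n m d \<Longrightarrow> canon n m e = canon n m d"
  unfolding canon_def by (simp add: orb_trans)

lemma orb_N:
  assumes "m \<le> n" "d \<in> Diag n" "\<not> Jdiag n m d" "e \<in> orb n m d"
  shows "e \<in> Diag n" "\<not> Jdiag n m e"
proof -
  obtain \<sigma> where s: "\<sigma> \<in> perms m" "e = act n m \<sigma> d" using assms(4) unfolding orb_def by blast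
  show "e \<in> Diag n" using act_Diag[OF s(1) assms(1,2)] s(2) by simp
  show "\<not> Jdiag n m e" using N_act[OF s(1) assms(1,3)] s(2) by simp
qed

lemma canon_reps:
  assumes "m \<le> n" "e \<in> Diag n" "\<not> Jdiag n m e"
  shows "canon n m e \<in> reps n m"
proof -
  have c: "canon n m e \<in> orb n m e" by (rule canon_in)
  have "canon n m (canon n m e) = canon n m e" using canon_eq[OF assms(1) c] .
  then show ?thesis unfolding reps_def using orb_N[OF assms c] by blast
qed

lemma sig_prop:
  assumes "m \<le> n"
  shows "sig n m e \<in> perms m \<and> act n m (sig n m e) (canon n m e) = e"
proof -
  have "e \<in> orb n m (canon n m e)"
    using orb_trans[OF assms canon_in[of n m e]] orb_self by blast
  then have "\<exists>\<sigma>. \<sigma> \<in> perms m \<and> act n m \<sigma> (canon n m e) = e" unfolding orb_def by blast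
  then show ?thesis unfolding sig_def by (rule someI_ex)
qed

lemma reps_canon:
  assumes "m \<le> n" "r \<in> reps n m" "\<sigma> \<in> perms m" "act n m \<sigma> r = e"
  shows "r = canon n m e"
proof -
  have "e \<in> orb n m r" using assms(3,4) unfolding orb_def by blast
  then have "canon n m e = canon n m r" by (rule canon_eq[OF assms(1)])
  then show ?thesis using assms(2) unfolding reps_def by simp
qed

lemma sum_single:
  assumes "finite A" "\<And>x. x \<in> A \<Longrightarrow> x \<noteq> a \<Longrightarrow> f x = 0"
  shows "sum f A = (if a \<in> A then f a else 0)"
proof -
  have "sum f A = sum (\<lambda>x. if x = a then f a else 0) A"
    using assms(2) by (intro sum.cong) auto
  also have "\<dots> = (if a \<in> A then f a else 0)"
    using assms(1) by (simp add: sum.delta)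
  finally show ?thesis .
qed

lemma finite_Diag: "finite (Diag n)"
  unfolding Diag_def by (rule finitely_many_partition_on) (simp add: nodes_def)

lemma finite_perms: "finite (perms m)"
  unfolding perms_def by (rule finite_permutations) simp

lemma finite_reps: "finite (reps n m)"
  using finite_Diag by (rule rev_finite_subset) (auto simp: reps_def)

lemma G:
  assumes "m \<le> n"
  shows "(\<Sum>r\<in>reps n m. \<Sum>\<sigma>\<in>perms m. if act n m \<sigma> r = e then c r \<sigma> else 0)
     = (if e \<in> Diag n \<and> \<not> Jdiag n m e then c (canon n m e) (sig n m e) else 0)"
proof (cases "e \<in> Diag n \<and> \<not> Jdiag n m e")
  case False
  have "act n m \<sigma> r \<noteq> e" if hr: "r \<in> reps n m" and hs: "\<sigma> \<in> perms m" for r \<sigma>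
  proof -
    have "r \<in> Diag n" "\<not> Jdiag n m r" using hr unfolding reps_def by auto
    then have "act n m \<sigma> r \<in> Diag n" "\<not> Jdiag n m (act n m \<sigma> r)"
      using act_Diag[OF hs assms] N_act[OF hs assms] by auto
    then show ?thesis using False by metis
  qed
  then have "(\<Sum>r\<in>reps n m. \<Sum>\<sigma>\<in>perms m. if act n m \<sigma> r = e then c r \<sigma> else 0) = 0"
    by (intro sum.neutral ballI) simp
  moreover have "(if e \<in> Diag n \<and> \<not> Jdiag n m e then c (canon n m e) (sig n m e) else 0) = 0"
    using False by (rule if_not_P)
  ultimately show ?thesis by (rule trans[OF _ sym])
next
  case True
  define r0 where "r0 = canon n m e"
  have r0: "r0 \<in> reps n m" unfolding r0_def using canon_reps[OF assms] True by blast
  have s0: "sig n m e \<in> perms m" "act n m (sig n m e) r0 = e" using sig_prop[OF assms] r0_def by auto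
  have "(\<Sum>r\<in>reps n m. \<Sum>\<sigma>\<in>perms m. if act n m \<sigma> r = e then c r \<sigma> else 0)
     = (\<Sum>\<sigma>\<in>perms m. if act n m \<sigma> r0 = e then c r0 \<sigma> else 0)"
  proof (subst sum_single[OF finite_reps, where a=r0])
    fix r assume r: "r \<in> reps n m" "r \<noteq> r0"
    have "act n m \<sigma> r \<noteq> e" if "\<sigma> \<in> perms m" for \<sigma>
      using reps_canon[OF assms r(1) that] r(2) r0_def by blast
    then show "(\<Sum>\<sigma>\<in>perms m. if act n m \<sigma> r = e then c r \<sigma> else 0) = 0" by simp
  qed (use r0 in simp)
  also have "\<dots> = c r0 (sig n m e)"
  proof (subst sum_single[OF finite_perms, where a="sig n m e"])
    fix \<sigma> assume s: "\<sigma> \<in> perms m" "\<sigma> \<noteq> sig n m e"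
    have "r0 \<in> Diag n" "\<not> Jdiag n m r0" using r0 unfolding reps_def by auto
    then have "act n m \<sigma> r0 \<noteq> e" using act_free[OF s(1) s0(1) assms] s0(2) s(2) by metis
    then show "(if act n m \<sigma> r0 = e then c r0 \<sigma> else 0) = 0" by simp
  qed (use s0 in simp)
  finally show ?thesis using True r0_def by simp
qed

lemma ract_ind:
  assumes "m \<le> n" "r \<in> Diag n"
  shows "ract \<delta> n m (ind r) a e = (\<Sum>\<sigma>\<in>perms m. if act n m \<sigma> r = e then a \<sigma> else 0)"
proof -
  let ?g = "RS_emb n m a"
  have "ract \<delta> n m (ind r) a e = (\<Sum>d1\<in>Diag n. \<Sum>d2\<in>Diag n.
      if dcomp n d1 d2 = e then ind r d1 * ?g d2 * \<delta> ^ nmid n d1 d2 else 0)"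
    unfolding ract_def pmult_def ..
  also have "\<dots> = (\<Sum>d2\<in>Diag n. if dcomp n r d2 = e then ?g d2 * \<delta> ^ nmid n r d2 else 0)"
  proof -
    have z: "(\<Sum>d2\<in>Diag n. if dcomp n d1 d2 = e then ind r d1 * ?g d2 * \<delta> ^ nmid n d1 d2 else 0) = 0"
      if "d1 \<in> Diag n" "d1 \<noteq> r" for d1
      using that by (intro sum.neutral ballI) (simp add: ind_def)
    show ?thesis
      by (subst sum_single[OF finite_Diag, where a=r, OF z])
         (use assms(2) in \<open>simp_all add: ind_def cong: if_cong\<close>)
  qed
  also have "\<dots> = (\<Sum>d2\<in>Diag n. \<Sum>\<sigma>\<in>perms m.
       if perm_diag n m \<sigma> = d2 \<and> dcomp n r d2 = e then a \<sigma> * \<delta> ^ nmid n r d2 else 0)"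
  proof (rule sum.cong[OF refl])
    fix d2
    show "(if dcomp n r d2 = e then ?g d2 * \<delta> ^ nmid n r d2 else 0) = (\<Sum>\<sigma>\<in>perms m.
       if perm_diag n m \<sigma> = d2 \<and> dcomp n r d2 = e then a \<sigma> * \<delta> ^ nmid n r d2 else 0)"
    proof (cases "dcomp n r d2 = e")
      case True
      have "?g d2 * \<delta> ^ nmid n r d2 = (\<Sum>\<sigma>\<in>perms m. (if perm_diag n m \<sigma> = d2 then a \<sigma> else 0) * \<delta> ^ nmid n r d2)"
        unfolding RS_emb_def by (rule sum_distrib_right)
      also have "\<dots> = (\<Sum>\<sigma>\<in>perms m.
        if perm_diag n m \<sigma> = d2 \<and> dcomp n r d2 = e then a \<sigma> * \<delta> ^ nmid n r d2 else 0)"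
        using True by (intro sum.cong) auto
      finally show ?thesis using True by simp
    next
      case False
      then show ?thesis by simp
    qed
  qed
  also have "\<dots> = (\<Sum>\<sigma>\<in>perms m. \<Sum>d2\<in>Diag n.
       if perm_diag n m \<sigma> = d2 \<and> dcomp n r d2 = e then a \<sigma> * \<delta> ^ nmid n r d2 else 0)"
    by (rule sum.swap)
  also have "\<dots> = (\<Sum>\<sigma>\<in>perms m. if act n m \<sigma> r = e then a \<sigma> else 0)"
  proof (rule sum.cong[OF refl])
    fix \<sigma> assume s: "\<sigma> \<in> perms m"
    have "(\<Sum>d2\<in>Diag n. if perm_diag n m \<sigma> = d2 \<and> dcomp n r d2 = e then a \<sigma> * \<delta> ^ nmid n r d2 else 0)
      = (if perm_diag n m \<sigma> \<in> Diag n then (if perm_diag n m \<sigma> = perm_diag n m \<sigma> \<and> dcomp n r (perm_diag n m \<sigma>) = e then a \<sigma> * \<delta> ^ nmid n r (perm_diag n m \<sigma>) else 0) else 0)"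
      by (rule sum_single[OF finite_Diag]) auto
    also have "\<dots> = (if dcomp n r (perm_diag n m \<sigma>) = e then a \<sigma> * \<delta> ^ nmid n r (perm_diag n m \<sigma>) else 0)"
      using perm_diag_Diag[OF s assms(1)] by simp
    also have "\<dots> = (if act n m \<sigma> r = e then a \<sigma> else 0)"
      using dcomp_perm[OF s assms] by simp
    finally show "(\<Sum>d2\<in>Diag n. if perm_diag n m \<sigma> = d2 \<and> dcomp n r d2 = e then a \<sigma> * \<delta> ^ nmid n r d2 else 0)
      = (if act n m \<sigma> r = e then a \<sigma> else 0)" .
  qed
  finally show ?thesis .
qed

lemma ind_inj:
  assumes "(1::'r::comm_ring_1) \<noteq> 0"
  shows "inj (ind :: int set set \<Rightarrow> int set set \<Rightarrow> 'r)"
proof (rule injI)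
  fix r r' :: "int set set"
  assume "(ind r :: int set set \<Rightarrow> 'r) = ind r'"
  then have "(ind r r :: 'r) = ind r' r" by simp
  then show "r = r'" using assms by (simp add: ind_def split: if_splits)
qed

lemma chain:
  fixes \<delta> :: "'r::comm_ring_1" and a :: "(int set set \<Rightarrow> 'r) \<Rightarrow> (nat \<Rightarrow> nat) \<Rightarrow> 'r"
  assumes mn: "m \<le> n" and one: "(1::'r) \<noteq> 0" and Sp: "Sp \<subseteq> ind ` reps n m"
    and out: "\<forall>b\<in>ind ` reps n m - Sp. a b = (\<lambda>_. 0)"
  shows "(\<Sum>b\<in>Sp. ract \<delta> n m b (a b) e)
     = (if e \<in> Diag n \<and> \<not> Jdiag n m e then a (ind (canon n m e)) (sig n m e) else 0)"
proof -
  have "(\<Sum>b\<in>Sp. ract \<delta> n m b (a b) e) = (\<Sum>b\<in>ind ` reps n m. ract \<delta> n m b (a b) e)"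
  proof (rule sum.mono_neutral_left)
    show "finite (ind ` reps n m)" using finite_reps by simp
    show "Sp \<subseteq> ind ` reps n m" by (rule Sp)
    show "\<forall>b\<in>ind ` reps n m - Sp. ract \<delta> n m b (a b) e = 0"
    proof
      fix b assume b: "b \<in> ind ` reps n m - Sp"
      then obtain r where r: "r \<in> reps n m" "b = ind r" by blast
      have "r \<in> Diag n" using r unfolding reps_def by simp
      moreover have "a b = (\<lambda>_. 0)" using out b by blast
      ultimately show "ract \<delta> n m b (a b) e = 0" using ract_ind[OF mn, of r \<delta> "\<lambda>_. 0" e] r(2) by simp
    qed
  qed
  also have "\<dots> = (\<Sum>r\<in>reps n m. ract \<delta> n m (ind r) (a (ind r)) e)"
    using sum.reindex[OF inj_on_subset[OF ind_inj[OF one] subset_UNIV], of "\<lambda>b. ract \<delta> n m b (a b) e" "reps n m"]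
    by simp
  also have "\<dots> = (\<Sum>r\<in>reps n m. \<Sum>\<sigma>\<in>perms m. if act n m \<sigma> r = e then a (ind r) \<sigma> else 0)"
  proof (rule sum.cong[OF refl])
    fix r assume "r \<in> reps n m"
    then have "r \<in> Diag n" unfolding reps_def by simp
    then show "ract \<delta> n m (ind r) (a (ind r)) e = (\<Sum>\<sigma>\<in>perms m. if act n m \<sigma> r = e then a (ind r) \<sigma> else 0)"
      by (rule ract_ind[OF mn])
  qed
  also have "\<dots> = (if e \<in> Diag n \<and> \<not> Jdiag n m e then a (ind (canon n m e)) (sig n m e) else 0)"
    by (rule G[OF mn])
  finally show ?thesis .
qed

theorem lemma5p2:
  fixes \<delta> :: "'r::comm_ring_1" and n m :: nat
  assumes "m \<le> n"
  shows "free_right_RS_quotient \<delta> n m"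
proof (cases "(1::'r) = 0")
  case True
  have z: "x = 0" for x :: 'r
  proof -
    have "x = x * 1" by simp
    also have "\<dots> = 0" using True by simp
    finally show ?thesis .
  qed
  have J0: "(\<lambda>_. 0) \<in> Jm n m" unfolding Jm_def Pn_def by simp
  have Jall: "g \<in> Jm n m" for g :: "int set set \<Rightarrow> 'r"
  proof -
    have "g = (\<lambda>_. 0)" by (rule ext) (rule z)
    then show ?thesis using J0 by simp
  qed
  have "free_quotient_basis \<delta> n m {}"
    unfolding free_quotient_basis_def
  proof (intro conjI ballI allI impI)
    fix f :: "int set set \<Rightarrow> 'r"
    show "\<exists>a. (\<forall>b\<in>{}. a b \<in> RS m) \<and> finite {b \<in> {}. a b \<noteq> (\<lambda>_. 0)} \<and>
        (\<lambda>d. f d - (\<Sum>b\<in>{b \<in> {}. a b \<noteq> (\<lambda>_. 0)}. ract \<delta> n m b (a b) d)) \<in> Jm n m"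
      apply (rule exI[of _ "\<lambda>_ _. 0"])
      apply (intro conjI)
        apply simp
       apply simp
      apply (rule Jall)
      done
  qed auto
  then show ?thesis unfolding free_right_RS_quotient_def by blast
next
  case False
  note mn = assms
  define B :: "(int set set \<Rightarrow> 'r) set" where "B = ind ` reps n m"
  have finB: "finite B" unfolding B_def using finite_reps by simp
  have reps_D: "r \<in> Diag n" "\<not> Jdiag n m r" if "r \<in> reps n m" for r
    using that unfolding reps_def by auto
  have BP: "B \<subseteq> Pn n"
  proof
    fix b assume "b \<in> B"
    then obtain r where r: "r \<in> reps n m" "b = ind r" unfolding B_def by blast
    have "r \<in> Diag n" using reps_D r by simp
    then show "b \<in> Pn n" unfolding Pn_def using r(2) by (auto simp: ind_def)
  qed
  have span: "\<exists>a. (\<forall>b\<in>B. a b \<in> RS m) \<and> finite {b\<in>B. a b \<noteq> (\<lambda>_. 0)} \<and>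
        (\<lambda>d. f d - (\<Sum>b\<in>{b\<in>B. a b \<noteq> (\<lambda>_. 0)}. ract \<delta> n m b (a b) d)) \<in> Jm n m"
    if f: "f \<in> Pn n" for f
  proof -
    define rb where "rb b = (SOME r. r \<in> reps n m \<and> b = ind r)" for b :: "int set set \<Rightarrow> 'r"
    have rb: "rb (ind r) = r" if "r \<in> reps n m" for r
    proof -
      have "\<exists>r'. r' \<in> reps n m \<and> (ind r :: int set set \<Rightarrow> 'r) = ind r'" using that by blast
      then have "rb (ind r) \<in> reps n m \<and> (ind r :: int set set \<Rightarrow> 'r) = ind (rb (ind r))"
        unfolding rb_def by (rule someI_ex)
      then show ?thesis using ind_inj[OF False] by (metis injD)
    qed
    define a where "a b = (if b \<in> B then (\<lambda>\<sigma>. if \<sigma> \<in> perms m then f (act n m \<sigma> (rb b)) else 0) else (\<lambda>_. 0))"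
      for b :: "int set set \<Rightarrow> 'r"
    define Sp where "Sp = {b\<in>B. a b \<noteq> (\<lambda>_. 0)}"
    have aRS: "\<forall>b\<in>B. a b \<in> RS m" unfolding a_def RS_def by auto
    have finS: "finite Sp" unfolding Sp_def using finB by simp
    have S1: "Sp \<subseteq> ind ` reps n m" unfolding Sp_def B_def by blast
    have S2: "\<forall>b\<in>ind ` reps n m - Sp. a b = (\<lambda>_. 0)" unfolding Sp_def B_def by blast
    have val: "(\<Sum>b\<in>Sp. ract \<delta> n m b (a b) e)
       = (if e \<in> Diag n \<and> \<not> Jdiag n m e then a (ind (canon n m e)) (sig n m e) else 0)" for e
      by (rule chain[OF mn False S1 S2])
    have val2: "(\<Sum>b\<in>Sp. ract \<delta> n m b (a b) e) = (if e \<in> Diag n \<and> \<not> Jdiag n m e then f e else 0)" for e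
    proof (cases "e \<in> Diag n \<and> \<not> Jdiag n m e")
      case True
      have c: "canon n m e \<in> reps n m" using canon_reps[OF mn] True by blast
      have s: "sig n m e \<in> perms m" "act n m (sig n m e) (canon n m e) = e" using sig_prop[OF mn] by auto
      have "a (ind (canon n m e)) (sig n m e) = f e"
        unfolding a_def using c s rb[OF c] by (simp add: B_def)
      then show ?thesis using val[of e] True by simp
    next
      case False
      show ?thesis using val[of e] by (simp only: if_not_P[OF False])
    qed
    have f0: "f d = 0" if "d \<notin> Diag n" for d using f that unfolding Pn_def by blast
    have diff: "f d - (\<Sum>b\<in>Sp. ract \<delta> n m b (a b) d) = (if d \<in> Diag n \<and> \<not> Jdiag n m d then 0 else f d)" for d
      unfolding val2 by simp
    have "(\<lambda>d. f d - (\<Sum>b\<in>Sp. ract \<delta> n m b (a b) d)) \<in> Jm n m"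
      unfolding Jm_def Pn_def mem_Collect_eq diff using f0 by auto
    then show ?thesis using aRS finS unfolding Sp_def by blast
  qed
  have indep: "\<forall>b\<in>B. a b = (\<lambda>_. 0)"
    if a1: "\<forall>b\<in>B. a b \<in> RS m" and a2: "finite {b\<in>B. a b \<noteq> (\<lambda>_. 0)}"
      and a3: "(\<lambda>d. \<Sum>b\<in>{b\<in>B. a b \<noteq> (\<lambda>_. 0)}. ract \<delta> n m b (a b) d) \<in> Jm n m" for a
  proof
    fix b assume b: "b \<in> B"
    then obtain r where r: "r \<in> reps n m" "b = ind r" unfolding B_def by blast
    show "a b = (\<lambda>_. 0)"
    proof
      fix \<sigma>
      show "a b \<sigma> = 0"
      proof (cases "\<sigma> \<in> perms m")
        case False
        then show ?thesis using a1 b unfolding RS_def by blast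
      next
        case True
        define e where "e = act n m \<sigma> r"
        have eN: "e \<in> Diag n" "\<not> Jdiag n m e"
          using act_Diag[OF True mn reps_D(1)[OF r(1)]] N_act[OF True mn reps_D(2)[OF r(1)]]
          unfolding e_def by auto
        have ce: "canon n m e = r" using reps_canon[OF mn r(1) True] e_def by simp
        have s: "sig n m e \<in> perms m" "act n m (sig n m e) r = e" using sig_prop[OF mn, of e] ce by auto
        have se: "sig n m e = \<sigma>"
          using act_free[OF s(1) True mn reps_D[OF r(1)]] s(2) e_def by simp
        have S1: "{b\<in>B. a b \<noteq> (\<lambda>_. 0)} \<subseteq> ind ` reps n m" unfolding B_def by blast
        have S2: "\<forall>b\<in>ind ` reps n m - {b\<in>B. a b \<noteq> (\<lambda>_. 0)}. a b = (\<lambda>_. 0)" unfolding B_def by blast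
        have "(\<Sum>b\<in>{b\<in>B. a b \<noteq> (\<lambda>_. 0)}. ract \<delta> n m b (a b) e)
           = (if e \<in> Diag n \<and> \<not> Jdiag n m e then a (ind (canon n m e)) (sig n m e) else 0)"
          by (rule chain[OF mn False S1 S2])
        then have "(\<Sum>b\<in>{b\<in>B. a b \<noteq> (\<lambda>_. 0)}. ract \<delta> n m b (a b) e) = a (ind r) \<sigma>"
          using eN ce se by simp
        moreover have "(\<Sum>b\<in>{b\<in>B. a b \<noteq> (\<lambda>_. 0)}. ract \<delta> n m b (a b) e) = 0"
        proof -
          have "\<forall>d. (\<Sum>b\<in>{b\<in>B. a b \<noteq> (\<lambda>_. 0)}. ract \<delta> n m b (a b) d) \<noteq> 0 \<longrightarrow> Jdiag n m d"
            using a3 unfolding Jm_def by blast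
          then show ?thesis using eN(2) by blast
        qed
        ultimately show ?thesis using r(2) by simp
      qed
    qed
  qed
  have "free_quotient_basis \<delta> n m B"
    unfolding free_quotient_basis_def using BP span indep by blast
  then show ?thesis unfolding free_right_RS_quotient_def by blast
qed

end
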